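(* (i) Let $W$ be a vector space, $c^1(z,w),\dots,c^r(z,w)$ $W$-valued vertex series, and $h_1,\dots,h_r\in\mathbb K$ with $h_i-h_j\notin\mathbb Z$ for $i\ne j$. If $\sum_{i=1}^rc^i(z,w)(z-w)^{h_i}=0$, then $c^i=0$ for all $i$. (ii) Let $c^1(\check z,\check w),\dots,c^r(\check z,\check w)$ be fields on $V$ and $\check h_1,\dots,\check h_r\in\mathbb K^2$ with $\check h_i-\check h_j\notin\mathbb Z^2$ for $i\ne j$. If $\sum_{i=1}^rc^i(\check z,\check w)(\check z-\check w)^{\check h_i}=0$, then $c^i=0$ for all $i$.
   Context: $\mathbb K$ is a field of characteristic $0$. For a vector space $W$, $W\{z,w\}$ denotes formal sums $\sum_{(n,m)\in\mathbb K^2}a_{n,m}z^{-n-1}w^{-m-1}$; a vertex series is an element of the $\mathbb K[z^{\mathbb K},w^{\mathbb K}]$-submodule generated by the power series $W[[z,w]]$ (finite sums of monomials $z^\alpha w^\beta$ times power series). For $h\in\mathbb K$, $(z-w)^h:=\sum_{i\in\mathbb N}(-1)^i\binom hi z^{h-i}w^i$. With $\check z=(z,\bar z)$, $\check w=(w,\bar w)$ and $\check h=(h,\bar h)$: $(\check z-\check w)^{\check h}:=(z-w)^h(\bar z-\bar w)^{\bar h}$. A field on $V$ is an $\mathrm{End}(V)$-valued formal distribution in $\check z,\check w$ (exponents in $\mathbb K$) whose value on every vector of $V$ is a vertex series. *)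

theory Defs
  imports Complex_Main "HOL-Library.Groups_Big_Fun"
begin

text \<open>Formal series are represented by their coefficient functions, indexed by the
exponents: f (a,b) is the coefficient of z^a w^b (a, b in K).  For the 4-variable
series of part (ii) the index is ((a, abar), (b, bbar)) for z^a zbar^abar w^b wbar^bbar.\<close>

text \<open>Monomial z^(fst s) w^(snd s) times the power series sum p(m,n) z^m w^n.\<close>
definition mono_ps2 :: "'k::field_char_0 \<times> 'k \<Rightarrow> (nat \<times> nat \<Rightarrow> 'w::zero) \<Rightarrow> 'k \<times> 'k \<Rightarrow> 'w" where
  "mono_ps2 s p e =
     (if \<exists>m n. e = (fst s + of_nat m, snd s + of_nat n)
      then p (THE mn. e = (fst s + of_nat (fst mn), snd s + of_nat (snd mn)))
      else 0)"

text \<open>Vertex series in (z,w): elements of the K[z^K,w^K]-submodule generated by W[[z,w]],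
i.e. finite sums of monomials times power series.\<close>
definition vertex_series2 :: "('k::field_char_0 \<times> 'k \<Rightarrow> 'w::comm_monoid_add) \<Rightarrow> bool" where
  "vertex_series2 f \<longleftrightarrow>
     (\<exists>S g. finite S \<and> f = (\<lambda>e. \<Sum>s\<in>S. mono_ps2 s (g s) e))"

text \<open>c(z,w) (z-w)^h, with (z-w)^h = sum_i (-1)^i (h choose i) z^(h-i) w^i.\<close>
definition mult_zw_pow :: "('k::field_char_0 \<Rightarrow> 'w::comm_monoid_add \<Rightarrow> 'w) \<Rightarrow> 'k \<Rightarrow>
    ('k \<times> 'k \<Rightarrow> 'w) \<Rightarrow> 'k \<times> 'k \<Rightarrow> 'w" where
  "mult_zw_pow scale h c e =
     Sum_any (\<lambda>i::nat. scale ((-1)^i * (h gchoose i))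
                        (c (fst e - h + of_nat i, snd e - of_nat i)))"

type_synonym 'k exp4 = "('k \<times> 'k) \<times> ('k \<times> 'k)"

definition mono_ps4 :: "'k::field_char_0 exp4 \<Rightarrow> ((nat \<times> nat) \<times> (nat \<times> nat) \<Rightarrow> 'w::zero)
    \<Rightarrow> 'k exp4 \<Rightarrow> 'w" where
  "mono_ps4 s p e =
     (if \<exists>m1 m2 n1 n2. e = ((fst (fst s) + of_nat m1, snd (fst s) + of_nat m2),
                            (fst (snd s) + of_nat n1, snd (snd s) + of_nat n2))
      then p (THE mn. e = ((fst (fst s) + of_nat (fst (fst mn)), snd (fst s) + of_nat (snd (fst mn))),
                          (fst (snd s) + of_nat (fst (snd mn)), snd (snd s) + of_nat (snd (snd mn)))))
      else 0)"

definition vertex_series4 :: "('k::field_char_0 exp4 \<Rightarrow> 'w::comm_monoid_add) \<Rightarrow> bool" where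
  "vertex_series4 f \<longleftrightarrow>
     (\<exists>S g. finite S \<and> f = (\<lambda>e. \<Sum>s\<in>S. mono_ps4 s (g s) e))"

definition is_field :: "('k::field_char_0 \<Rightarrow> 'v::ab_group_add \<Rightarrow> 'v) \<Rightarrow> ('k exp4 \<Rightarrow> 'v \<Rightarrow> 'v) \<Rightarrow> bool" where
  "is_field scale c \<longleftrightarrow>
     (\<forall>e. Vector_Spaces.linear scale scale (c e)) \<and> (\<forall>v. vertex_series4 (\<lambda>e. c e v))"

text \<open>c(zc,wc) (zc-wc)^hc, hc = (h, hbar), applied to a vector v, as a V-valued series.\<close>
definition field_mult_pow :: "('k::field_char_0 \<Rightarrow> 'v::comm_monoid_add \<Rightarrow> 'v) \<Rightarrow> 'k \<times> 'k \<Rightarrow>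
    ('k exp4 \<Rightarrow> 'v \<Rightarrow> 'v) \<Rightarrow> 'v \<Rightarrow> 'k exp4 \<Rightarrow> 'v" where
  "field_mult_pow scale hh c v e =
     Sum_any (\<lambda>(i::nat, j::nat).
        scale ((-1)^(i + j) * (fst hh gchoose i) * (snd hh gchoose j))
          (c ((fst (fst e) - fst hh + of_nat i, snd (fst e) - snd hh + of_nat j),
              (fst (snd e) - of_nat i, snd (snd e) - of_nat j)) v))"

end

theory Submission
  imports Defs
begin


definition bb :: "'k::field_char_0 \<Rightarrow> int \<Rightarrow> 'k" where
  "bb h j = (if j < 0 then 0 else (-1)^nat j * (h gchoose nat j))"

lemma bb_nat: "bb h (int k) = (-1)^k * (h gchoose k)"
  by (simp add: bb_def)

lemma bb_zero_left: "bb 0 j = (if j = 0 then 1 else 0)"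
  by (auto simp: bb_def gbinomial_0_left)

lemma bb_rec: "of_int j * bb h j = (of_int j - 1 - h) * bb h (j - 1)"
proof (cases "j \<le> 0")
  case True
  then show ?thesis
    by (cases "j = 0") (auto simp: bb_def)
next
  case False
  then obtain k where k: "j = int (Suc k)" by (metis gr0_implies_Suc not_le of_nat_0_less_iff zero_less_imp_eq_int)
  have a: "of_nat (Suc k) * (h gchoose Suc k) = (h - of_nat k) * (h gchoose k)"
    using gbinomial_absorption[of k h] gbinomial_absorb_comp[of h k] by simp
  have "of_int j * bb h j = - ((-1)^k * (of_nat (Suc k) * (h gchoose Suc k)))"
    unfolding k bb_nat by simp
  also have "\<dots> = (of_int j - 1 - h) * bb h (j - 1)"
    unfolding a using k by (simp add: bb_nat algebra_simps)
  finally show ?thesis .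
qed

definition supp :: "('a \<Rightarrow> 'b::zero) \<Rightarrow> 'a set" where "supp a = {m. a m \<noteq> 0}"

definition conv2 :: "('k::field_char_0 \<Rightarrow> 'w::ab_group_add \<Rightarrow> 'w) \<Rightarrow> 'k \<Rightarrow> 'k \<Rightarrow> (int \<times> int \<Rightarrow> 'w) \<Rightarrow> int \<times> int \<Rightarrow> 'w" where
  "conv2 sc h hb a n = Sum_any (\<lambda>m. sc (bb h (fst n - fst m) * bb hb (snd n - snd m)) (a m))"

lemma Sum_any_inj_reindex:
  assumes "inj f" "\<And>y. y \<notin> range f \<Longrightarrow> g y = (0::'b::comm_monoid_add)"
  shows "Sum_any (g \<circ> f) = Sum_any g"
proof -
  have e: "{y. g y \<noteq> 0} = f ` {x. g (f x) \<noteq> 0}"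
  proof
    show "{y. g y \<noteq> 0} \<subseteq> f ` {x. g (f x) \<noteq> 0}"
    proof
      fix y assume y: "y \<in> {y. g y \<noteq> 0}"
      then obtain x where "y = f x" using assms(2) by blast
      then show "y \<in> f ` {x. g (f x) \<noteq> 0}" using y by blast
    qed
  qed auto
  have "Sum_any g = sum g (f ` {x. g (f x) \<noteq> 0})"
    by (simp add: Sum_any.expand_set e)
  also have "\<dots> = sum (g \<circ> f) {x. g (f x) \<noteq> 0}"
    by (rule sum.reindex) (use assms(1) inj_on_subset in blast)
  also have "\<dots> = Sum_any (g \<circ> f)" by (simp add: Sum_any.expand_set)
  finally show ?thesis by simp
qed

lemma fin_supp_scale:
  assumes vs: "vector_space sc" and "finite (supp a)"
  shows "finite {m. sc (f m) (a m) \<noteq> 0}"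
proof -
  interpret vector_space sc by fact
  show ?thesis by (rule finite_subset[OF _ assms(2)]) (auto simp: supp_def)
qed

lemma scale_Sum_any:
  assumes vs: "vector_space sc" and "finite {m. g m \<noteq> 0}"
  shows "sc c (Sum_any g) = Sum_any (\<lambda>m. sc c (g m))"
proof -
  interpret vector_space sc by fact
  have "Sum_any (\<lambda>m. sc c (g m)) = sum (\<lambda>m. sc c (g m)) {m. g m \<noteq> 0}"
    by (rule Sum_any.expand_superset) (use assms in auto)
  moreover have "Sum_any g = sum g {m. g m \<noteq> 0}" by (simp add: Sum_any.expand_set)
  ultimately show ?thesis by (simp add: scale_sum_right)
qed

lemma conv2_zero:
  assumes vs: "vector_space sc"
  shows "conv2 sc h hb (\<lambda>m. 0) n = 0"
proof -
  interpret vector_space sc by fact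
  show ?thesis by (simp add: conv2_def)
qed

definition opU :: "('k::field_char_0 \<Rightarrow> 'w::ab_group_add \<Rightarrow> 'w) \<Rightarrow> 'k \<Rightarrow> 'k \<Rightarrow> 'k \<Rightarrow> (int \<times> int \<Rightarrow> 'w) \<Rightarrow> int \<times> int \<Rightarrow> 'w" where
  "opU sc P Q h a m = sc (of_int (fst m) + P) (a m) + sc (Q - h - of_int (fst m)) (a (fst m - 1, snd m))"

lemma conv2_opU:
  assumes vs: "vector_space sc" and fin: "finite (supp a)"
  shows "conv2 sc h hb (opU sc P Q h a) n =
     sc (of_int (fst n) + P) (conv2 sc h hb a n) + sc (Q - of_int (fst n)) (conv2 sc h hb a (fst n - 1, snd n))"
proof -
  interpret vector_space sc by fact
  define B where "B = (\<lambda>m. bb h (fst n - fst m) * bb hb (snd n - snd m))"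
  define B1 where "B1 = (\<lambda>m. bb h (fst n - 1 - fst m) * bb hb (snd n - snd m))"
  define sh where "sh = (\<lambda>m::int\<times>int. (fst m + 1, snd m))"
  have bij: "bij sh" unfolding sh_def
    by (rule o_bij[where g="\<lambda>m. (fst m - 1, snd m)"]) auto
  have fs: "finite {m. sc (f m) (a m) \<noteq> 0}" for f
    by (rule fin_supp_scale[OF vs fin])
  have fs2: "finite {m. sc (f m) (a (fst m - 1, snd m)) \<noteq> 0}" for f
  proof -
    have "{m. sc (f m) (a (fst m - 1, snd m)) \<noteq> 0} \<subseteq> sh ` supp a"
      by (auto simp: supp_def sh_def image_iff) (metis diff_add_cancel)
    then show ?thesis using fin finite_subset by blast
  qed
  have L: "conv2 sc h hb (opU sc P Q h a) n =
     Sum_any (\<lambda>m. sc (B m * (of_int (fst m) + P)) (a m)) +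
     Sum_any (\<lambda>m. sc (B m * (Q - h - of_int (fst m))) (a (fst m - 1, snd m)))"
    unfolding conv2_def opU_def B_def
    by (simp only: Sum_any.distrib[symmetric, OF fs fs2]) (simp add: scale_right_distrib)
  have L2: "Sum_any (\<lambda>m. sc (B m * (Q - h - of_int (fst m))) (a (fst m - 1, snd m)))
      = Sum_any (\<lambda>m. sc (B1 m * (Q - h - of_int (fst m) - 1)) (a m))"
    by (rule Sum_any.reindex_cong[OF bij]) (auto simp: sh_def B_def B1_def algebra_simps)
  have R: "sc (of_int (fst n) + P) (conv2 sc h hb a n) + sc (Q - of_int (fst n)) (conv2 sc h hb a (fst n - 1, snd n))
     = Sum_any (\<lambda>m. sc ((of_int (fst n) + P) * B m) (a m)) + Sum_any (\<lambda>m. sc ((Q - of_int (fst n)) * B1 m) (a m))"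
    unfolding conv2_def B_def B1_def
    by (simp only: scale_Sum_any[OF vs fs]) simp
  have co: "B m * (of_int (fst m) + P) + B1 m * (Q - h - of_int (fst m) - 1)
      = (of_int (fst n) + P) * B m + (Q - of_int (fst n)) * B1 m" for m
  proof -
    have r: "of_int (fst n - fst m) * bb h (fst n - fst m) = (of_int (fst n - fst m) - 1 - h) * bb h (fst n - fst m - 1)"
      by (rule bb_rec)
    have "B m * (of_int (fst m) + P) + B1 m * (Q - h - of_int (fst m) - 1)
      - ((of_int (fst n) + P) * B m + (Q - of_int (fst n)) * B1 m)
      = bb hb (snd n - snd m) * ((of_int (fst n - fst m) - 1 - h) * bb h (fst n - fst m - 1)
          - of_int (fst n - fst m) * bb h (fst n - fst m))"
      unfolding B_def B1_def by (simp add: algebra_simps)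
    also have "\<dots> = 0" using r by simp
    finally show ?thesis by simp
  qed
  show ?thesis
    unfolding L L2 R
    by (simp only: Sum_any.distrib[symmetric, OF fs fs] scale_left_distrib[symmetric] co)
qed

definition eqfam :: "('k::field_char_0 \<Rightarrow> 'w::ab_group_add \<Rightarrow> 'w) \<Rightarrow> 'i set \<Rightarrow> ('i \<Rightarrow> 'k) \<Rightarrow> ('i \<Rightarrow> 'k) \<Rightarrow> ('i \<Rightarrow> int \<times> int \<Rightarrow> 'w) \<Rightarrow> bool" where
  "eqfam sc I h hb a \<longleftrightarrow> (\<forall>n. (\<Sum>i\<in>I. conv2 sc (h i) (hb i) (a i) n) = 0)"

definition width :: "(int \<times> int \<Rightarrow> 'w::zero) \<Rightarrow> nat" where
  "width a = (if supp a = {} then 0 else nat (Max (fst ` supp a) - Min (fst ` supp a) + 1))"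

lemma width_bound:
  assumes "finite (supp b)" "supp b \<subseteq> {m. L \<le> fst m \<and> fst m \<le> U}"
  shows "width b \<le> nat (U - L + 1)"
proof (cases "supp b = {}")
  case False
  have "Max (fst ` supp b) \<le> U" using assms False by (subst Max_le_iff) auto
  moreover have "L \<le> Min (fst ` supp b)" using assms False by (subst Min_ge_iff) auto
  ultimately show ?thesis using False by (simp add: width_def)
qed (simp add: width_def)

lemma supp_opU:
  assumes vs: "vector_space sc"
  shows "supp (opU sc P Q h a) \<subseteq> supp a \<union> (\<lambda>m. (fst m + 1, snd m)) ` supp a"
proof -
  interpret vector_space sc by fact
  show ?thesis
    by (auto simp: supp_def opU_def image_iff) (metis diff_add_cancel)
qed

lemma opU_nonzero:
  assumes vs: "vector_space sc" and fin: "finite (supp a)" and nz: "supp a \<noteq> {}"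
    and c: "\<And>t. t \<in> fst ` supp a \<Longrightarrow> Q - h - of_int t - 1 \<noteq> 0"
  shows "supp (opU sc P Q h a) \<noteq> {}"
proof -
  interpret vector_space sc by fact
  define t where "t = Max (fst ` supp a)"
  have tin: "t \<in> fst ` supp a" unfolding t_def using fin nz by (intro Max_in) auto
  then obtain m where m: "m \<in> supp a" "fst m = t" by auto
  have z: "a (t + 1, snd m) = 0"
  proof (rule ccontr)
    assume "a (t + 1, snd m) \<noteq> 0"
    then have "t + 1 \<in> fst ` supp a" by (force simp: supp_def)
    then have "t + 1 \<le> t" unfolding t_def using fin by (intro Max_ge) auto
    then show False by simp
  qed
  have "opU sc P Q h a (t + 1, snd m) = sc (Q - h - of_int t - 1) (a m)"
  proof -
    have e: "m = (t, snd m)" using m by (cases m) auto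
    have "Q - h - of_int (t + 1) = Q - h - of_int t - 1" by simp
    then show ?thesis unfolding opU_def using z e by (simp del: of_int_add)
  qed
  also have "\<dots> \<noteq> 0" using c[OF tin] m by (simp add: supp_def)
  finally show ?thesis by (auto simp: supp_def)
qed

lemma eqfam_remove_zero:
  assumes vs: "vector_space sc" and "finite I" "r \<in> I" "a r = (\<lambda>m. 0)" "eqfam sc I h hb a"
  shows "eqfam sc (I - {r}) h hb a"
  using assms(5) unfolding eqfam_def
  by (simp add: sum.remove[OF assms(2,3)] assms(4) conv2_zero[OF vs])

lemma reduce_U:
  assumes vs: "vector_space sc"
  shows "width (a r) = w \<Longrightarrow> finite I \<Longrightarrow> r \<in> I \<Longrightarrow> (\<forall>i\<in>I. finite (supp (a i))) \<Longrightarrow> eqfam sc I h hb a \<Longrightarrow>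
    \<exists>a'. (\<forall>i\<in>I-{r}. finite (supp (a' i))) \<and> eqfam sc (I-{r}) h hb a' \<and>
        (\<forall>i\<in>I-{r}. h i - h r \<notin> \<int> \<longrightarrow> a' i = (\<lambda>m. 0) \<longrightarrow> a i = (\<lambda>m. 0))"
proof (induction w arbitrary: a rule: less_induct)
  case (less w a)
  interpret vector_space sc by fact
  show ?case
  proof (cases "supp (a r) = {}")
    case True
    then have "a r = (\<lambda>m. 0)" by (auto simp: supp_def)
    then show ?thesis using eqfam_remove_zero[OF vs less.prems(2,3) _ less.prems(5)] less.prems(4) by blast
  next
    case False
    define S where "S = supp (a r)"
    have finS: "finite S" using less.prems S_def by auto
    define lo where "lo = Min (fst ` S)"
    define hi where "hi = Max (fst ` S)"
    have lohi: "x \<in> S \<Longrightarrow> lo \<le> fst x \<and> fst x \<le> hi" for x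
      unfolding lo_def hi_def using finS by (auto intro!: Min_le Max_ge)
    have lehi: "lo \<le> hi"
    proof -
      obtain x where "x \<in> S" using False S_def by blast
      then have "lo \<le> fst x \<and> fst x \<le> hi" by (rule lohi)
      then show ?thesis by linarith
    qed
    have wdef: "w = nat (hi - lo + 1)" using less.prems(1) False by (simp add: width_def S_def lo_def hi_def)
    define P where "P = - (of_int lo :: 'a)"
    define Q where "Q = h r + of_int hi + 1"
    define a1 where "a1 = (\<lambda>i. opU sc P Q (h i) (a i))"
    have fin1: "\<forall>i\<in>I. finite (supp (a1 i))"
    proof
      fix i assume "i \<in> I"
      then have "finite (supp (a i))" using less.prems by auto
      then show "finite (supp (a1 i))" unfolding a1_def
        using finite_subset[OF supp_opU[OF vs]] by blast
    qed
    have eq1: "eqfam sc I h hb a1"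
      unfolding eqfam_def
    proof
      fix n :: "int \<times> int"
      have "(\<Sum>i\<in>I. conv2 sc (h i) (hb i) (a1 i) n) =
         (\<Sum>i\<in>I. sc (of_int (fst n) + P) (conv2 sc (h i) (hb i) (a i) n) + sc (Q - of_int (fst n)) (conv2 sc (h i) (hb i) (a i) (fst n - 1, snd n)))"
        unfolding a1_def using less.prems(4) by (intro sum.cong refl conv2_opU[OF vs]) auto
      also have "\<dots> = sc (of_int (fst n) + P) (\<Sum>i\<in>I. conv2 sc (h i) (hb i) (a i) n) + sc (Q - of_int (fst n)) (\<Sum>i\<in>I. conv2 sc (h i) (hb i) (a i) (fst n - 1, snd n))"
        by (simp add: sum.distrib scale_sum_right)
      also have "\<dots> = 0"
      proof -
        have z: "\<And>n. (\<Sum>i\<in>I. conv2 sc (h i) (hb i) (a i) n) = 0" using less.prems(5) unfolding eqfam_def by blast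
        show ?thesis by (simp only: z scale_zero_right add_0)
      qed
      finally show "(\<Sum>i\<in>I. conv2 sc (h i) (hb i) (a1 i) n) = 0" .
    qed
    have box: "supp (a1 r) \<subseteq> {m. lo + 1 \<le> fst m \<and> fst m \<le> hi}"
    proof
      fix m assume m: "m \<in> supp (a1 r)"
      have z: "x \<notin> S \<Longrightarrow> a r x = 0" for x by (simp add: S_def supp_def)
      show "m \<in> {m. lo + 1 \<le> fst m \<and> fst m \<le> hi}"
      proof (rule ccontr)
        assume "m \<notin> {m. lo + 1 \<le> fst m \<and> fst m \<le> hi}"
        then consider "fst m < lo" | "fst m = lo" | "fst m = hi + 1" | "fst m > hi + 1" by force
        then have "a1 r m = 0"
        proof cases
          case 1
          then have "a r m = 0" "a r (fst m - 1, snd m) = 0" using lohi by (auto intro!: z dest: lohi) 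
          then show ?thesis by (simp add: a1_def opU_def)
        next
          case 2
          then have "a r (fst m - 1, snd m) = 0" using lohi by (auto intro!: z dest: lohi)
          then show ?thesis using 2 by (simp add: a1_def opU_def P_def)
        next
          case 3
          then have "a r m = 0" using lohi by (auto intro!: z dest: lohi)
          then show ?thesis using 3 by (simp add: a1_def opU_def Q_def)
        next
          case 4
          then have "a r m = 0" "a r (fst m - 1, snd m) = 0" using lohi by (auto intro!: z dest: lohi)
          then show ?thesis by (simp add: a1_def opU_def)
        qed
        then show False using m by (simp add: supp_def)
      qed
    qed
    have "width (a1 r) \<le> nat (hi - (lo + 1) + 1)"
      by (rule width_bound[OF _ box]) (use fin1 less.prems(3) in auto)
    then have wlt: "width (a1 r) < w" using wdef lehi by simp
    obtain a' where a': "\<forall>i\<in>I-{r}. finite (supp (a' i))" "eqfam sc (I-{r}) h hb a'"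
        "\<forall>i\<in>I-{r}. h i - h r \<notin> \<int> \<longrightarrow> a' i = (\<lambda>m. 0) \<longrightarrow> a1 i = (\<lambda>m. 0)"
      using less.IH[OF wlt refl less.prems(2,3) fin1 eq1] by blast
    have inj: "a i = (\<lambda>m. 0)" if i: "i \<in> I - {r}" "h i - h r \<notin> \<int>" "a1 i = (\<lambda>m. 0)" for i
    proof (rule ccontr)
      assume "a i \<noteq> (\<lambda>m. 0)"
      then have ne: "supp (a i) \<noteq> {}" by (auto simp: supp_def)
      have "supp (a1 i) \<noteq> {}" unfolding a1_def
      proof (rule opU_nonzero[OF vs _ ne])
        show "finite (supp (a i))" using i less.prems by auto
        fix t assume "t \<in> fst ` supp (a i)"
        show "Q - h i - of_int t - 1 \<noteq> 0"
        proof
          assume "Q - h i - of_int t - 1 = 0"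
          then have "h i - h r = of_int (hi - t)" by (simp add: Q_def algebra_simps)
          then show False using i(2) by (metis Ints_of_int)
        qed
      qed
      then show False using i(3) by (simp add: supp_def)
    qed
    show ?thesis using a' inj by blast
  qed
qed


lemma bij_swap': "bij (prod.swap :: 'a \<times> 'b \<Rightarrow> 'b \<times> 'a)"
  by (rule o_bij[where g=prod.swap]) auto

lemma conv2_swap:
  "conv2 sc hb h (a \<circ> prod.swap) (prod.swap n) = conv2 sc h hb a n"
  unfolding conv2_def
  by (rule Sum_any.reindex_cong[OF bij_swap']) (auto simp: mult.commute)

lemma supp_swap_fin: "finite (supp a) \<Longrightarrow> finite (supp (a \<circ> prod.swap))"
proof -
  assume f: "finite (supp a)"
  have "supp (a \<circ> prod.swap) = prod.swap -` supp a" by (auto simp: supp_def)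
  then show ?thesis using finite_vimageI[OF f, of prod.swap] by (auto simp: inj_on_def)
qed

lemma conv2_swap2: "conv2 sc hb h (a \<circ> prod.swap) n = conv2 sc h hb a (prod.swap n)"
  using conv2_swap[of sc hb h a "prod.swap n"] by simp

lemma reduce_V:
  assumes vs: "vector_space sc" and fI: "finite I" and r: "r \<in> I" and fin: "\<forall>i\<in>I. finite (supp (a i))"
    and eq: "eqfam sc I h hb a"
  shows "\<exists>a'. (\<forall>i\<in>I-{r}. finite (supp (a' i))) \<and> eqfam sc (I-{r}) h hb a' \<and>
        (\<forall>i\<in>I-{r}. hb i - hb r \<notin> \<int> \<longrightarrow> a' i = (\<lambda>m. 0) \<longrightarrow> a i = (\<lambda>m. 0))"
proof -
  define as where "as = (\<lambda>i. a i \<circ> prod.swap)"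
  have fins: "\<forall>i\<in>I. finite (supp (as i))" using fin supp_swap_fin by (auto simp: as_def)
  have eqs: "eqfam sc I hb h as"
    unfolding eqfam_def
  proof
    fix n :: "int \<times> int"
    have "(\<Sum>i\<in>I. conv2 sc (hb i) (h i) (as i) n) = (\<Sum>i\<in>I. conv2 sc (h i) (hb i) (a i) (prod.swap n))"
      unfolding as_def by (simp add: conv2_swap2)
    also have "\<dots> = 0" using eq unfolding eqfam_def by blast
    finally show "(\<Sum>i\<in>I. conv2 sc (hb i) (h i) (as i) n) = 0" .
  qed
  obtain a' where a': "\<forall>i\<in>I-{r}. finite (supp (a' i))" "eqfam sc (I-{r}) hb h a'"
      "\<forall>i\<in>I-{r}. hb i - hb r \<notin> \<int> \<longrightarrow> a' i = (\<lambda>m. 0) \<longrightarrow> as i = (\<lambda>m. 0)"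
    using reduce_U[OF vs refl fI r fins eqs] by blast
  define a2 where "a2 = (\<lambda>i. a' i \<circ> prod.swap)"
  have f2: "\<forall>i\<in>I-{r}. finite (supp (a2 i))" using a'(1) supp_swap_fin by (auto simp: a2_def)
  have e2: "eqfam sc (I-{r}) h hb a2"
    unfolding eqfam_def
  proof
    fix n :: "int \<times> int"
    have "(\<Sum>i\<in>I-{r}. conv2 sc (h i) (hb i) (a2 i) n) = (\<Sum>i\<in>I-{r}. conv2 sc (hb i) (h i) (a' i) (prod.swap n))"
      unfolding a2_def by (simp add: conv2_swap2)
    also have "\<dots> = 0" using a'(2) unfolding eqfam_def by blast
    finally show "(\<Sum>i\<in>I-{r}. conv2 sc (h i) (hb i) (a2 i) n) = 0" .
  qed
  have i2: "\<forall>i\<in>I-{r}. hb i - hb r \<notin> \<int> \<longrightarrow> a2 i = (\<lambda>m. 0) \<longrightarrow> a i = (\<lambda>m. 0)"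
  proof (intro ballI impI)
    fix i assume i: "i \<in> I - {r}" "hb i - hb r \<notin> \<int>" "a2 i = (\<lambda>m. 0)"
    have "a' i = (\<lambda>m. 0)"
    proof
      fix m show "a' i m = 0" using fun_cong[OF i(3), of "prod.swap m"] by (simp add: a2_def)
    qed
    then have "as i = (\<lambda>m. 0)" using a'(3) i by blast
    then show "a i = (\<lambda>m. 0)"
    proof -
      assume z: "as i = (\<lambda>m. 0)"
      show ?thesis
      proof
        fix m show "a i m = 0" using fun_cong[OF z, of "prod.swap m"] by (simp add: as_def)
      qed
    qed
  qed
  show ?thesis using f2 e2 i2 by blast
qed

lemma conv2_single:
  assumes vs: "vector_space sc" and fin: "finite (supp a)" and z: "\<And>n. conv2 sc h hb a n = 0"
  shows "a = (\<lambda>m. 0)"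
proof (rule ccontr)
  interpret vector_space sc by fact
  assume "a \<noteq> (\<lambda>m. 0)"
  then have ne: "supp a \<noteq> {}" by (auto simp: supp_def)
  define lo1 where "lo1 = Min (fst ` supp a)"
  have l1in: "lo1 \<in> fst ` supp a" unfolding lo1_def using fin ne by (intro Min_in) auto
  have l1le: "m \<in> supp a \<Longrightarrow> lo1 \<le> fst m" for m unfolding lo1_def using fin by (intro Min_le) auto
  define S1 where "S1 = {m \<in> supp a. fst m = lo1}"
  have fS1: "finite S1" using fin by (auto simp: S1_def)
  have neS1: "S1 \<noteq> {}" using l1in by (auto simp: S1_def)
  define lo2 where "lo2 = Min (snd ` S1)"
  have l2in: "lo2 \<in> snd ` S1" unfolding lo2_def using fS1 neS1 by (intro Min_in) auto
  have l2le: "m \<in> S1 \<Longrightarrow> lo2 \<le> snd m" for m unfolding lo2_def using fS1 by (intro Min_le) auto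
  have pin: "(lo1, lo2) \<in> supp a" using l2in by (auto simp: S1_def)
  have only: "sc (bb h (lo1 - fst m) * bb hb (lo2 - snd m)) (a m) = 0" if "m \<noteq> (lo1, lo2)" for m
  proof (cases "m \<in> supp a")
    case True
    have "lo1 \<le> fst m" using l1le True by blast
    show ?thesis
    proof (cases "fst m = lo1")
      case True2: True
      then have "m \<in> S1" using True by (simp add: S1_def)
      then have "lo2 \<le> snd m" by (rule l2le)
      then have "lo2 < snd m" using that True2 by (cases m) auto
      then show ?thesis by (simp add: bb_def)
    next
      case False
      then have "lo1 < fst m" using \<open>lo1 \<le> fst m\<close> by simp
      then show ?thesis by (simp add: bb_def)
    qed
  qed (simp add: supp_def)
  have "conv2 sc h hb a (lo1, lo2) = sum (\<lambda>m. sc (bb h (lo1 - fst m) * bb hb (lo2 - snd m)) (a m)) {(lo1, lo2)}"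
    unfolding conv2_def fst_conv snd_conv by (rule Sum_any.expand_superset) (use only in auto)
  also have "\<dots> = a (lo1, lo2)" by (simp add: bb_def)
  finally show False using z pin by (simp add: supp_def)
qed

lemma core:
  assumes vs: "vector_space sc"
  shows "finite I \<Longrightarrow> (\<forall>i\<in>I. finite (supp (a i))) \<Longrightarrow> eqfam sc I h hb a \<Longrightarrow>
    (\<forall>i\<in>I. \<forall>j\<in>I. i \<noteq> j \<longrightarrow> \<not> (h i - h j \<in> \<int> \<and> hb i - hb j \<in> \<int>)) \<Longrightarrow> \<forall>i\<in>I. a i = (\<lambda>m. 0)"
proof (induction "card I" arbitrary: I a rule: less_induct)
  case less
  show ?case
  proof (cases "I = {}")
    case False
    then obtain r where r: "r \<in> I" by blast
    have cl: "card (I - {r}) < card I" using card_Diff1_less[OF less.prems(1) r] .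
    have pw: "\<forall>i\<in>I-{r}. \<forall>j\<in>I-{r}. i \<noteq> j \<longrightarrow> \<not> (h i - h j \<in> \<int> \<and> hb i - hb j \<in> \<int>)"
      using less.prems(4) by blast
    obtain a' where a': "\<forall>i\<in>I-{r}. finite (supp (a' i))" "eqfam sc (I-{r}) h hb a'"
        "\<forall>i\<in>I-{r}. h i - h r \<notin> \<int> \<longrightarrow> a' i = (\<lambda>m. 0) \<longrightarrow> a i = (\<lambda>m. 0)"
      using reduce_U[OF vs refl less.prems(1) r less.prems(2,3)] by blast
    have z1: "\<forall>i\<in>I-{r}. a' i = (\<lambda>m. 0)"
      using less.hyps[OF cl _ a'(1,2) pw] less.prems(1) by blast
    obtain a2 where a2: "\<forall>i\<in>I-{r}. finite (supp (a2 i))" "eqfam sc (I-{r}) h hb a2"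
        "\<forall>i\<in>I-{r}. hb i - hb r \<notin> \<int> \<longrightarrow> a2 i = (\<lambda>m. 0) \<longrightarrow> a i = (\<lambda>m. 0)"
      using reduce_V[OF vs less.prems(1) r less.prems(2,3)] by blast
    have z2: "\<forall>i\<in>I-{r}. a2 i = (\<lambda>m. 0)"
      using less.hyps[OF cl _ a2(1,2) pw] less.prems(1) by blast
    have others: "\<forall>i\<in>I-{r}. a i = (\<lambda>m. 0)"
    proof
      fix i assume i: "i \<in> I - {r}"
      then have "\<not> (h i - h r \<in> \<int> \<and> hb i - hb r \<in> \<int>)" using less.prems(4) r by blast
      then show "a i = (\<lambda>m. 0)" using a'(3) z1 a2(3) z2 i by blast
    qed
    have "conv2 sc (h r) (hb r) (a r) n = 0" for n
    proof -
      have "(\<Sum>i\<in>I. conv2 sc (h i) (hb i) (a i) n) = 0" using less.prems(3) unfolding eqfam_def by blast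
      moreover have "(\<Sum>i\<in>I. conv2 sc (h i) (hb i) (a i) n) = conv2 sc (h r) (hb r) (a r) n"
        using others conv2_zero[OF vs] by (simp add: sum.remove[OF less.prems(1) r])
      ultimately show ?thesis by simp
    qed
    then have "a r = (\<lambda>m. 0)" using conv2_single[OF vs] less.prems(2) r by blast
    then show ?thesis using others by blast
  qed simp
qed



lemma fin_slice:
  "finite {m::int. \<exists>N1 N3::nat. A - of_int m = (of_nat N1 :: 'k::field_char_0) \<and> B + of_int m = (of_nat N3 :: 'k)}"
  (is "finite ?X")
proof (cases "?X = {}")
  case False
  then obtain m0 N10 N30 where m0: "A - of_int m0 = (of_nat N10 :: 'k)" "B + of_int m0 = of_nat N30" by blast
  define T where "T = N10 + N30"
  have "?X \<subseteq> {m0 - int T .. m0 + int T}"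
  proof
    fix m assume "m \<in> ?X"
    then obtain N1 N3 where m: "A - of_int m = (of_nat N1 :: 'k)" "B + of_int m = of_nat N3" by blast
    have "(of_nat (N1 + N3) :: 'k) = (A - of_int m) + (B + of_int m)" using m by simp
    also have "\<dots> = (A - of_int m0) + (B + of_int m0)" by simp
    also have "\<dots> = of_nat T" using m0 unfolding T_def by simp
    finally have "(of_nat (N1 + N3) :: 'k) = of_nat T" .
    then have s: "N1 + N3 = T" using of_nat_eq_iff by blast
    have "(of_int (m - m0) :: 'k) = (B + of_int m) - (B + of_int m0)" by simp
    also have "\<dots> = of_int (int N3 - int N30)" using m(2) m0(2) by simp
    finally have "(of_int (m - m0) :: 'k) = of_int (int N3 - int N30)" .
    then have "m - m0 = int N3 - int N30" using of_int_eq_iff by blast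
    then show "m \<in> {m0 - int T .. m0 + int T}" using s unfolding T_def by auto
  qed
  then show ?thesis using finite_subset by blast
next
  case True
  show ?thesis unfolding True by simp
qed

lemma vs2_fin:
  assumes "vertex_series2 (F :: 'k::field_char_0 \<times> 'k \<Rightarrow> 'w::comm_monoid_add)"
  shows "finite {m::int. F (A - of_int m, B + of_int m) \<noteq> 0}"
proof -
  obtain S g where S: "finite S" "F = (\<lambda>e. \<Sum>s\<in>S. mono_ps2 s (g s) e)"
    using assms unfolding vertex_series2_def by blast
  have "{m::int. F (A - of_int m, B + of_int m) \<noteq> 0} \<subseteq>
     (\<Union>s\<in>S. {m::int. \<exists>N1 N3::nat. (A - fst s) - of_int m = (of_nat N1 :: 'k) \<and> (B - snd s) + of_int m = of_nat N3})"
  proof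
    fix m assume "m \<in> {m::int. F (A - of_int m, B + of_int m) \<noteq> 0}"
    then have "(\<Sum>s\<in>S. mono_ps2 s (g s) (A - of_int m, B + of_int m)) \<noteq> 0" using S by simp
    then obtain s where s: "s \<in> S" "mono_ps2 s (g s) (A - of_int m, B + of_int m) \<noteq> 0"
      using sum.not_neutral_contains_not_neutral by blast
    then obtain N1 N3 where "(A - of_int m, B + of_int m) = (fst s + of_nat N1, snd s + of_nat N3)"
      unfolding mono_ps2_def by (auto split: if_splits)
    then have "(A - fst s) - of_int m = (of_nat N1 :: 'k) \<and> (B - snd s) + of_int m = of_nat N3"
      by (auto simp: algebra_simps)
    then show "m \<in> (\<Union>s\<in>S. {m::int. \<exists>N1 N3::nat. (A - fst s) - of_int m = (of_nat N1 :: 'k) \<and> (B - snd s) + of_int m = of_nat N3})"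
      using s by blast
  qed
  moreover have "finite (\<Union>s\<in>S. {m::int. \<exists>N1 N3::nat. (A - fst s) - of_int m = (of_nat N1 :: 'k) \<and> (B - snd s) + of_int m = of_nat N3})"
    using S(1) fin_slice by blast
  ultimately show ?thesis using finite_subset by blast
qed

lemma vs4_fin:
  assumes "vertex_series4 (F :: 'k::field_char_0 exp4 \<Rightarrow> 'w::comm_monoid_add)"
  shows "finite {m::int\<times>int. F ((A1 - of_int (fst m), A2 - of_int (snd m)), (B1 + of_int (fst m), B2 + of_int (snd m))) \<noteq> 0}"
proof -
  obtain S g where S: "finite S" "F = (\<lambda>e. \<Sum>s\<in>S. mono_ps4 s (g s) e)"
    using assms unfolding vertex_series4_def by blast
  define sl where "sl = (\<lambda>(A::'k) (B::'k). {m::int. \<exists>N1 N3::nat. A - of_int m = (of_nat N1 :: 'k) \<and> B + of_int m = of_nat N3})"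
  have "{m::int\<times>int. F ((A1 - of_int (fst m), A2 - of_int (snd m)), (B1 + of_int (fst m), B2 + of_int (snd m))) \<noteq> 0} \<subseteq>
     (\<Union>s\<in>S. sl (A1 - fst (fst s)) (B1 - fst (snd s)) \<times> sl (A2 - snd (fst s)) (B2 - snd (snd s)))"
  proof
    fix m assume "m \<in> {m::int\<times>int. F ((A1 - of_int (fst m), A2 - of_int (snd m)), (B1 + of_int (fst m), B2 + of_int (snd m))) \<noteq> 0}"
    then have "(\<Sum>s\<in>S. mono_ps4 s (g s) ((A1 - of_int (fst m), A2 - of_int (snd m)), (B1 + of_int (fst m), B2 + of_int (snd m)))) \<noteq> 0" using S by simp
    then obtain s where s: "s \<in> S" "mono_ps4 s (g s) ((A1 - of_int (fst m), A2 - of_int (snd m)), (B1 + of_int (fst m), B2 + of_int (snd m))) \<noteq> 0"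
      using sum.not_neutral_contains_not_neutral by blast
    then obtain N1 N2 N3 N4 where e: "((A1 - of_int (fst m), A2 - of_int (snd m)), (B1 + of_int (fst m), B2 + of_int (snd m)))
        = ((fst (fst s) + of_nat N1, snd (fst s) + of_nat N2), (fst (snd s) + of_nat N3, snd (snd s) + of_nat N4))"
      unfolding mono_ps4_def by (auto split: if_splits)
    then have e1: "A1 - of_int (fst m) = fst (fst s) + of_nat N1" and e2: "A2 - of_int (snd m) = snd (fst s) + of_nat N2"
      and e3: "B1 + of_int (fst m) = fst (snd s) + of_nat N3" and e4: "B2 + of_int (snd m) = snd (snd s) + of_nat N4"
      by simp_all
    have "(A1 - fst (fst s)) - of_int (fst m) = of_nat N1 \<and> (B1 - fst (snd s)) + of_int (fst m) = of_nat N3"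
      using e1 e3 by (simp add: algebra_simps)
    moreover have "(A2 - snd (fst s)) - of_int (snd m) = of_nat N2 \<and> (B2 - snd (snd s)) + of_int (snd m) = of_nat N4"
      using e2 e4 by (simp add: algebra_simps)
    ultimately have "fst m \<in> sl (A1 - fst (fst s)) (B1 - fst (snd s))" "snd m \<in> sl (A2 - snd (fst s)) (B2 - snd (snd s))"
      unfolding sl_def by blast+
    then show "m \<in> (\<Union>s\<in>S. sl (A1 - fst (fst s)) (B1 - fst (snd s)) \<times> sl (A2 - snd (fst s)) (B2 - snd (snd s)))"
      using s by (cases m) auto
  qed
  moreover have "finite (\<Union>s\<in>S. sl (A1 - fst (fst s)) (B1 - fst (snd s)) \<times> sl (A2 - snd (fst s)) (B2 - snd (snd s)))"
    using S(1) fin_slice unfolding sl_def by blast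
  ultimately show ?thesis using finite_subset by blast
qed

lemma bij_neg: "bij (\<lambda>m::int\<times>int. (fst n - fst m, snd n - snd m))"
  by (rule o_bij[where g="\<lambda>m::int\<times>int. (fst n - fst m, snd n - snd m)"]) auto

lemma fmp_conv:
  assumes vs: "vector_space sc"
  shows "field_mult_pow sc hh c v ((D1 - of_int (fst n), D2 - of_int (snd n)), (B1 + of_int (fst n), B2 + of_int (snd n)))
    = conv2 sc (fst hh) (snd hh) (\<lambda>m. c ((D1 - fst hh - of_int (fst m), D2 - snd hh - of_int (snd m)), (B1 + of_int (fst m), B2 + of_int (snd m))) v) n"
proof -
  interpret vector_space sc by fact
  define a where "a = (\<lambda>m::int\<times>int. c ((D1 - fst hh - of_int (fst m), D2 - snd hh - of_int (snd m)), (B1 + of_int (fst m), B2 + of_int (snd m))) v)"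
  define G where "G = (\<lambda>j::int\<times>int. sc (bb (fst hh) (fst j) * bb (snd hh) (snd j)) (a (fst n - fst j, snd n - snd j)))"
  define f where "f = (\<lambda>(k::nat, l::nat). (int k, int l))"
  have "field_mult_pow sc hh c v ((D1 - of_int (fst n), D2 - of_int (snd n)), (B1 + of_int (fst n), B2 + of_int (snd n)))
      = Sum_any (G \<circ> f)"
    unfolding field_mult_pow_def
  proof (rule Sum_any.cong)
    fix kl :: "nat \<times> nat"
    obtain k l where kl: "kl = (k, l)" by (cases kl)
    show "(case kl of (i, j) \<Rightarrow> sc ((- 1) ^ (i + j) * (fst hh gchoose i) * (snd hh gchoose j))
           (c ((fst (fst ((D1 - of_int (fst n), D2 - of_int (snd n)), B1 + of_int (fst n), B2 + of_int (snd n))) - fst hh + of_nat i,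
                snd (fst ((D1 - of_int (fst n), D2 - of_int (snd n)), B1 + of_int (fst n), B2 + of_int (snd n))) - snd hh + of_nat j),
               fst (snd ((D1 - of_int (fst n), D2 - of_int (snd n)), B1 + of_int (fst n), B2 + of_int (snd n))) - of_nat i,
               snd (snd ((D1 - of_int (fst n), D2 - of_int (snd n)), B1 + of_int (fst n), B2 + of_int (snd n))) - of_nat j) v)) = (G \<circ> f) kl"
      unfolding kl G_def f_def a_def by (simp add: bb_nat power_add algebra_simps)
  qed
  also have "\<dots> = Sum_any G"
  proof (rule Sum_any_inj_reindex)
    show "inj f" unfolding f_def by (auto simp: inj_def)
    fix y assume "y \<notin> range f"
    have "fst y < 0 \<or> snd y < 0"
    proof (rule ccontr)
      assume "\<not> (fst y < 0 \<or> snd y < 0)"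
      then have "y = f (nat (fst y), nat (snd y))" by (cases y) (simp add: f_def)
      then show False using \<open>y \<notin> range f\<close> by blast
    qed
    then show "G y = 0" by (auto simp: G_def bb_def)
  qed
  also have "\<dots> = Sum_any (\<lambda>m. sc (bb (fst hh) (fst n - fst m) * bb (snd hh) (snd n - snd m)) (a m))"
  proof (rule Sum_any.reindex_cong[OF bij_neg[of n]])
    show "G \<circ> (\<lambda>m. (fst n - fst m, snd n - snd m)) = (\<lambda>m. sc (bb (fst hh) (fst n - fst m) * bb (snd hh) (snd n - snd m)) (a m))"
      by (rule ext) (simp add: G_def)
  qed
  finally show ?thesis unfolding conv2_def a_def .
qed

lemma mzp_conv:
  assumes vs: "vector_space sc"
  shows "mult_zw_pow sc H c (D - of_int (fst n), B + of_int (fst n))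
    = conv2 sc H 0 (\<lambda>m. if snd m = 0 then c (D - H - of_int (fst m), B + of_int (fst m)) else 0) (fst n, 0)"
    and "snd n \<noteq> 0 \<Longrightarrow> conv2 sc H 0 (\<lambda>m. if snd m = 0 then c (D - H - of_int (fst m), B + of_int (fst m)) else 0) n = 0"
proof -
  interpret vector_space sc by fact
  define c1 where "c1 = (\<lambda>m::int. c (D - H - of_int m, B + of_int m))"
  define A where "A = (\<lambda>m::int\<times>int. if snd m = 0 then c1 (fst m) else 0)"
  have Aeq: "(\<lambda>m. if snd m = 0 then c (D - H - of_int (fst m), B + of_int (fst m)) else 0) = A"
    unfolding A_def c1_def by simp
  have gen: "conv2 sc H 0 A n' = Sum_any (\<lambda>m1. sc (bb H (fst n' - m1) * bb 0 (snd n')) (c1 m1))" for n'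
  proof -
    have "Sum_any (\<lambda>m1. sc (bb H (fst n' - m1) * bb 0 (snd n')) (c1 m1))
       = Sum_any ((\<lambda>m. sc (bb H (fst n' - fst m) * bb 0 (snd n' - snd m)) (A m)) \<circ> (\<lambda>m1. (m1, 0)))"
      by (simp add: A_def o_def)
    also have "\<dots> = conv2 sc H 0 A n'"
      unfolding conv2_def
    proof (rule Sum_any_inj_reindex)
      show "inj (\<lambda>m1::int. (m1, 0::int))" by (auto simp: inj_def)
      fix y :: "int \<times> int" assume y: "y \<notin> range (\<lambda>m1::int. (m1, 0::int))"
      have "snd y \<noteq> 0"
      proof
        assume "snd y = 0"
        then have "y = (\<lambda>m1::int. (m1, 0::int)) (fst y)" by (cases y) simp
        then show False using y by blast
      qed
      then show "sc (bb H (fst n' - fst y) * bb 0 (snd n' - snd y)) (A y) = 0" by (simp add: A_def)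
    qed
    finally show ?thesis by simp
  qed
  show "snd n \<noteq> 0 \<Longrightarrow> conv2 sc H 0 (\<lambda>m. if snd m = 0 then c (D - H - of_int (fst m), B + of_int (fst m)) else 0) n = 0"
    unfolding Aeq gen by (simp add: bb_zero_left)
  define G where "G = (\<lambda>j::int. sc (bb H j) (c1 (fst n - j)))"
  have "mult_zw_pow sc H c (D - of_int (fst n), B + of_int (fst n)) = Sum_any (G \<circ> int)"
    unfolding mult_zw_pow_def G_def c1_def
    by (rule Sum_any.cong) (simp add: bb_nat algebra_simps)
  also have "\<dots> = Sum_any G"
  proof (rule Sum_any_inj_reindex)
    show "inj int" by (simp add: inj_def)
    fix y assume "y \<notin> range int"
    then have "y < 0" by (metis nonneg_int_cases not_less rangeI)
    then show "G y = 0" by (auto simp: G_def bb_def)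
  qed
  also have "\<dots> = Sum_any (\<lambda>m1. sc (bb H (fst n - m1)) (c1 m1))"
    by (rule Sum_any.reindex_cong[where l="\<lambda>m. fst n - m"]) (auto simp: G_def intro!: o_bij[where g="\<lambda>m. fst n - m"])
  also have "\<dots> = conv2 sc H 0 A (fst n, 0)" unfolding gen by (simp add: bb_zero_left)
  finally show "mult_zw_pow sc H c (D - of_int (fst n), B + of_int (fst n))
    = conv2 sc H 0 (\<lambda>m. if snd m = 0 then c (D - H - of_int (fst m), B + of_int (fst m)) else 0) (fst n, 0)"
    unfolding Aeq .
qed



theorem mainTheorem8:
  fixes scaleW :: "'k::field_char_0 \<Rightarrow> 'w::ab_group_add \<Rightarrow> 'w"
    and scaleV :: "'k \<Rightarrow> 'v::ab_group_add \<Rightarrow> 'v"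
  assumes "vector_space scaleW" and "vector_space scaleV"
  shows "(\<forall>(r::nat) (c::nat \<Rightarrow> 'k \<times> 'k \<Rightarrow> 'w) (h::nat \<Rightarrow> 'k).
            (\<forall>i\<in>{1..r}. vertex_series2 (c i)) \<longrightarrow>
            (\<forall>i\<in>{1..r}. \<forall>j\<in>{1..r}. i \<noteq> j \<longrightarrow> h i - h j \<notin> \<int>) \<longrightarrow>
            (\<lambda>e. \<Sum>i\<in>{1..r}. mult_zw_pow scaleW (h i) (c i) e) = (\<lambda>e. 0) \<longrightarrow>
            (\<forall>i\<in>{1..r}. c i = (\<lambda>e. 0)))
       \<and> (\<forall>(r::nat) (c::nat \<Rightarrow> 'k exp4 \<Rightarrow> 'v \<Rightarrow> 'v) (h::nat \<Rightarrow> 'k \<times> 'k).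
            (\<forall>i\<in>{1..r}. is_field scaleV (c i)) \<longrightarrow>
            (\<forall>i\<in>{1..r}. \<forall>j\<in>{1..r}. i \<noteq> j \<longrightarrow>
                \<not> (fst (h i) - fst (h j) \<in> \<int> \<and> snd (h i) - snd (h j) \<in> \<int>)) \<longrightarrow>
            (\<forall>v. (\<lambda>e. \<Sum>i\<in>{1..r}. field_mult_pow scaleV (h i) (c i) v e) = (\<lambda>e. 0)) \<longrightarrow>
            (\<forall>i\<in>{1..r}. c i = (\<lambda>e v. 0)))"
proof (intro conjI allI impI)
  fix r :: nat and c :: "nat \<Rightarrow> 'k \<times> 'k \<Rightarrow> 'w" and h :: "nat \<Rightarrow> 'k"
  assume vsc: "\<forall>i\<in>{1..r}. vertex_series2 (c i)"
    and pw: "\<forall>i\<in>{1..r}. \<forall>j\<in>{1..r}. i \<noteq> j \<longrightarrow> h i - h j \<notin> \<int>"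
    and eq: "(\<lambda>e. \<Sum>i\<in>{1..r}. mult_zw_pow scaleW (h i) (c i) e) = (\<lambda>e. 0)"
  show "\<forall>i\<in>{1..r}. c i = (\<lambda>e. 0)"
  proof (intro ballI ext)
    fix i0 and e :: "'k \<times> 'k" assume i0: "i0 \<in> {1..r}"
    define D where "D = fst e + h i0"
    define B where "B = snd e"
    define A where "A = (\<lambda>j (m::int\<times>int). if snd m = 0 then c j (D - h j - of_int (fst m), B + of_int (fst m)) else 0)"
    have fin: "\<forall>j\<in>{1..r}. finite (supp (A j))"
    proof
      fix j assume j: "j \<in> {1..r}"
      have "supp (A j) \<subseteq> (\<lambda>m1. (m1, 0)) ` {m. c j (D - h j - of_int m, B + of_int m) \<noteq> 0}"
      proof
        fix m assume "m \<in> supp (A j)"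
        then have "snd m = 0" "c j (D - h j - of_int (fst m), B + of_int (fst m)) \<noteq> 0"
          by (auto simp: supp_def A_def split: if_splits)
        then show "m \<in> (\<lambda>m1. (m1, 0)) ` {m. c j (D - h j - of_int m, B + of_int m) \<noteq> 0}"
          by (cases m) auto
      qed
      moreover have "finite {m::int. c j (D - h j - of_int m, B + of_int m) \<noteq> 0}"
        using vs2_fin vsc j by blast
      ultimately show "finite (supp (A j))" using finite_subset by blast
    qed
    have eqf: "eqfam scaleW {1..r} h (\<lambda>_. 0) A"
      unfolding eqfam_def
    proof
      fix n :: "int \<times> int"
      show "(\<Sum>j\<in>{1..r}. conv2 scaleW (h j) 0 (A j) n) = 0"
      proof (cases "snd n = 0")
        case True
        then have nn: "n = (fst n, 0)" by (cases n) simp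
        have "(\<Sum>j\<in>{1..r}. conv2 scaleW (h j) 0 (A j) n) =
            (\<Sum>j\<in>{1..r}. mult_zw_pow scaleW (h j) (c j) (D - of_int (fst n), B + of_int (fst n)))"
          by (subst nn, intro sum.cong refl) (simp add: A_def mzp_conv(1)[OF assms(1)])
        also have "\<dots> = 0" using fun_cong[OF eq] by simp
        finally show ?thesis .
      next
        case False
        then show ?thesis using mzp_conv(2)[OF assms(1)] unfolding A_def by simp
      qed
    qed
    have pw2: "\<forall>i\<in>{1..r}. \<forall>j\<in>{1..r}. i \<noteq> j \<longrightarrow> \<not> (h i - h j \<in> \<int> \<and> (\<lambda>_. 0::'k) i - (\<lambda>_. 0) j \<in> \<int>)"
      using pw by blast
    have "\<forall>j\<in>{1..r}. A j = (\<lambda>m. 0)" by (rule core[OF assms(1) _ fin eqf pw2]) simp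
    then have "A i0 (0,0) = 0" using i0 by simp
    moreover have "A i0 (0,0) = c i0 e" by (simp add: A_def D_def B_def)
    ultimately show "c i0 e = 0" by simp
  qed
next
  fix r :: nat and c :: "nat \<Rightarrow> 'k exp4 \<Rightarrow> 'v \<Rightarrow> 'v" and h :: "nat \<Rightarrow> 'k \<times> 'k"
  assume isf: "\<forall>i\<in>{1..r}. is_field scaleV (c i)"
    and pw: "\<forall>i\<in>{1..r}. \<forall>j\<in>{1..r}. i \<noteq> j \<longrightarrow> \<not> (fst (h i) - fst (h j) \<in> \<int> \<and> snd (h i) - snd (h j) \<in> \<int>)"
    and eq: "\<forall>v. (\<lambda>e. \<Sum>i\<in>{1..r}. field_mult_pow scaleV (h i) (c i) v e) = (\<lambda>e. 0)"
  show "\<forall>i\<in>{1..r}. c i = (\<lambda>e v. 0)"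
  proof (intro ballI ext)
    fix i0 and e :: "'k exp4" and v :: 'v assume i0: "i0 \<in> {1..r}"
    define D1 where "D1 = fst (fst e) + fst (h i0)"
    define D2 where "D2 = snd (fst e) + snd (h i0)"
    define B1 where "B1 = fst (snd e)"
    define B2 where "B2 = snd (snd e)"
    define A where "A = (\<lambda>j (m::int\<times>int). c j ((D1 - fst (h j) - of_int (fst m), D2 - snd (h j) - of_int (snd m)),
                                               (B1 + of_int (fst m), B2 + of_int (snd m))) v)"
    have fin: "\<forall>j\<in>{1..r}. finite (supp (A j))"
    proof
      fix j assume j: "j \<in> {1..r}"
      have "vertex_series4 (\<lambda>e. c j e v)" using isf j unfolding is_field_def by blast
      from vs4_fin[OF this, of "D1 - fst (h j)" "D2 - snd (h j)" B1 B2]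
      show "finite (supp (A j))" by (simp add: supp_def A_def)
    qed
    have eqf: "eqfam scaleV {1..r} (\<lambda>j. fst (h j)) (\<lambda>j. snd (h j)) A"
      unfolding eqfam_def
    proof
      fix n :: "int \<times> int"
      have "(\<Sum>j\<in>{1..r}. conv2 scaleV (fst (h j)) (snd (h j)) (A j) n) =
          (\<Sum>j\<in>{1..r}. field_mult_pow scaleV (h j) (c j) v ((D1 - of_int (fst n), D2 - of_int (snd n)), (B1 + of_int (fst n), B2 + of_int (snd n))))"
        by (intro sum.cong refl) (simp add: A_def fmp_conv[OF assms(2)])
      also have "\<dots> = 0" using fun_cong[OF spec[OF eq, of v]] by simp
      finally show "(\<Sum>j\<in>{1..r}. conv2 scaleV (fst (h j)) (snd (h j)) (A j) n) = 0" .
    qed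
    have "\<forall>j\<in>{1..r}. A j = (\<lambda>m. 0)" by (rule core[OF assms(2) _ fin eqf pw]) simp
    then have "A i0 (0,0) = 0" using i0 by simp
    moreover have "A i0 (0,0) = c i0 e v" by (simp add: A_def D1_def D2_def B1_def B2_def)
    ultimately show "c i0 e v = 0" by simp
  qed
qed

end
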